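(* Let $\Phi$ be a Young function, $\varphi\in\mathcal{G}^{\rm dec}_1$, $n\ge2$, $k\in[2,n]\cap\mathbb{N}$ and $a_0,\dots,a_{k-1}>0$. Then, writing points of $\mathbb{R}^n$ as $(x_0,\dots,x_{n-1})$, \[ \bigl\|\chi_{\prod_{j=0}^{k-1}[0,a_j]\times\mathbb{R}^{n-k}}\bigr\|_{\mathcal{M}_\Phi^\varphi,\mathrm{cube}}=\sup_{R>0}\frac1{\varphi(R)}\Phi^{-1}\Bigl(\frac{R^k}{\prod_{j=0}^{k-1}\min(a_j,R)}\Bigr)^{-1}. \]
   Context: A Young function is a convex $\Phi:[0,\infty)\to[0,\infty)$ with $\Phi(0)=0$, $\lim_{t\to\infty}\Phi(t)=\infty$; its generalized inverse is $\Phi^{-1}(u)=\inf\{t\ge0:\Phi(t)>u\}$ for $u\in[0,\infty)$. $\mathcal{G}^{\rm dec}_1$ is the set of $\varphi:(0,\infty)\to(0,\infty)$ that are almost decreasing (there is $C>0$ with $C\varphi(r)\ge\varphi(s)$ for $r<s$) and submultiplicative ($\varphi(rs)\le C\varphi(r)\varphi(s)$). For $a\in\mathbb{R}^n$, $r>0$, $Q(a,r)=\{x:\max_i|x_i-a_i|\le r\}$ is the cube of side length $2r$; $\|f\|_{\Phi,Q}=\inf\{\lambda>0:\frac1{|Q|}\int_Q\Phi(|f|/\lambda)\le1\}$, and the cube version of the Orlicz–Morrey norm is $\|f\|_{\mathcal{M}_\Phi^\varphi,\mathrm{cube}}=\sup_{a\in\mathbb{R}^n,r>0}\frac1{\varphi(2r)}\|f\|_{\Phi,Q(a,r)}$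 (equivalent up to constants to the ball version $\sup_{a,r}\frac1{\varphi(r)}\|f\|_{\Phi,B(a,r)}$). $\chi_E$ is the characteristic function of $E$. *)

theory Defs
  imports "HOL-Analysis.Analysis"
begin

definition young_function :: "(real \<Rightarrow> real) \<Rightarrow> bool" where
  "young_function \<Phi> \<longleftrightarrow> convex_on {0..} \<Phi> \<and> (\<forall>t\<ge>0. \<Phi> t \<ge> 0) \<and> \<Phi> 0 = 0
     \<and> filterlim \<Phi> at_top at_top"

definition young_inv :: "(real \<Rightarrow> real) \<Rightarrow> real \<Rightarrow> real" where
  "young_inv \<Phi> u = Inf {t. t \<ge> 0 \<and> \<Phi> t > u}"

definition G_dec_1 :: "(real \<Rightarrow> real) \<Rightarrow> bool" where
  "G_dec_1 \<phi> \<longleftrightarrow> (\<forall>r>0. \<phi> r > 0)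
     \<and> (\<exists>C>0. \<forall>r s. 0 < r \<longrightarrow> r < s \<longrightarrow> \<phi> s \<le> C * \<phi> r)
     \<and> (\<exists>C>0. \<forall>r s. 0 < r \<longrightarrow> 0 < s \<longrightarrow> \<phi> (r * s) \<le> C * \<phi> r * \<phi> s)"

text \<open>Lebesgue measure on R^n, points are functions on {..<n}.\<close>
definition Rn :: "nat \<Rightarrow> (nat \<Rightarrow> real) measure" where
  "Rn n = PiM {..<n} (\<lambda>_. lborel)"

text \<open>Cube Q(a,r) of side length 2r.\<close>
definition cube :: "nat \<Rightarrow> (nat \<Rightarrow> real) \<Rightarrow> real \<Rightarrow> (nat \<Rightarrow> real) set" where
  "cube n a r = {x \<in> space (Rn n). \<forall>i<n. \<bar>x i - a i\<bar> \<le> r}"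

text \<open>Luxemburg--Orlicz average norm over Q (value +oo if no admissible lambda).\<close>
definition orlicz_norm ::
  "nat \<Rightarrow> (real \<Rightarrow> real) \<Rightarrow> ((nat \<Rightarrow> real) \<Rightarrow> real) \<Rightarrow> (nat \<Rightarrow> real) set \<Rightarrow> ereal" where
  "orlicz_norm n \<Phi> f Q = Inf (ereal ` {l. l > 0 \<and>
      ennreal (1 / measure (Rn n) Q) * (\<integral>\<^sup>+ x \<in> Q. ennreal (\<Phi> (\<bar>f x\<bar> / l)) \<partial>Rn n) \<le> 1})"

definition orlicz_morrey_cube ::
  "nat \<Rightarrow> (real \<Rightarrow> real) \<Rightarrow> (real \<Rightarrow> real) \<Rightarrow> ((nat \<Rightarrow> real) \<Rightarrow> real) \<Rightarrow> ereal" where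
  "orlicz_morrey_cube n \<Phi> \<phi> f =
     (SUP ar \<in> {(a, r). r > (0::real)}. orlicz_norm n \<Phi> f (cube n (fst ar) (snd ar)) / ereal (\<phi> (2 * snd ar)))"

end

theory Submission
  imports Defs
begin


lemma young_mono:
  assumes "young_function \<Phi>" "0 \<le> x" "x \<le> y"
  shows "\<Phi> x \<le> \<Phi> y"
proof (cases "y = 0")
  case True thus ?thesis using assms by simp
next
  case False
  hence y: "y > 0" using assms by simp
  have cv: "convex_on {0..} \<Phi>" and nn: "\<Phi> y \<ge> 0" and z: "\<Phi> 0 = 0"
    using assms y unfolding young_function_def by auto
  have "\<Phi> ((1 - x/y) *\<^sub>R 0 + (x/y) *\<^sub>R y) \<le> (1 - x/y) * \<Phi> 0 + (x/y) * \<Phi> y"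
    using y assms by (intro convex_onD[OF cv]) auto
  hence "\<Phi> x \<le> (x/y) * \<Phi> y" using y z by simp
  also have "\<dots> \<le> \<Phi> y" using nn assms y by (intro mult_left_le_one_le) auto
  finally show ?thesis .
qed

lemma young_small:
  assumes "young_function \<Phi>" "0 \<le> s" "s \<le> 1"
  shows "\<Phi> s \<le> s * \<Phi> 1"
proof -
  have cv: "convex_on {0..} \<Phi>" and z: "\<Phi> 0 = 0"
    using assms unfolding young_function_def by auto
  have "\<Phi> ((1 - s) *\<^sub>R 0 + s *\<^sub>R 1) \<le> (1 - s) * \<Phi> 0 + s * \<Phi> 1"
    using assms by (intro convex_onD[OF cv]) auto
  thus ?thesis using z by simp
qed

lemma young_inv_char:
  assumes Y: "young_function \<Phi>" and u: "u > 0"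
  shows "young_inv \<Phi> u > 0" and "\<And>s. s > 0 \<Longrightarrow> \<Phi> s \<le> u \<longleftrightarrow> s \<le> young_inv \<Phi> u"
proof -
  define S where "S = {t. t \<ge> 0 \<and> \<Phi> t > u}"
  have yi: "young_inv \<Phi> u = Inf S" unfolding S_def young_inv_def by simp
  have "filterlim \<Phi> at_top at_top" using Y unfolding young_function_def by auto
  hence "eventually (\<lambda>t. \<Phi> t > u) at_top" by (simp add: filterlim_at_top_dense)
  then obtain N where "\<And>t. t \<ge> N \<Longrightarrow> \<Phi> t > u" by (auto simp: eventually_at_top_linorder)
  hence "max N 0 \<in> S" unfolding S_def by auto
  hence ne: "S \<noteq> {}" by auto
  have bdd: "bdd_below S" unfolding S_def by (rule bdd_belowI[of _ 0]) auto
  have A: "s \<le> Inf S" if "s \<ge> 0" "\<Phi> s \<le> u" for s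
  proof (rule cInf_greatest[OF ne])
    fix t assume "t \<in> S"
    hence "t \<ge> 0" "\<Phi> t > u" unfolding S_def by auto
    thus "s \<le> t" using young_mono[OF Y, of t s] that by force
  qed
  have cont: "continuous_on {0<..} \<Phi>"
    using Y unfolding young_function_def
    by (intro convex_on_continuous) (auto intro: convex_on_subset)
  have B: "\<Phi> s \<le> u" if "s > 0" "s \<le> Inf S" for s
  proof (rule ccontr)
    assume "\<not> \<Phi> s \<le> u"
    hence gt: "\<Phi> s > u" by simp
    have "isCont \<Phi> s" using cont that(1)
      by (simp add: continuous_on_eq_continuous_at)
    hence "(\<Phi> \<longlongrightarrow> \<Phi> s) (at_left s)"
      by (simp add: isCont_def filterlim_at_split)
    hence "eventually (\<lambda>x. \<Phi> x > u) (at_left s)"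
      using gt by (rule order_tendstoD)
    then obtain b where b: "b < s" "\<And>y. b < y \<Longrightarrow> y < s \<Longrightarrow> \<Phi> y > u"
      by (auto simp: eventually_at_left_field)
    define y where "y = (max b 0 + s) / 2"
    have "b < y" "y < s" "y > 0" using b that unfolding y_def by auto
    hence "y \<in> S" using b unfolding S_def by auto
    hence "Inf S \<le> y" using bdd by (rule cInf_lower)
    thus False using \<open>y < s\<close> that by simp
  qed
  define s0 where "s0 = min 1 (u / (\<Phi> 1 + 1))"
  have p1: "\<Phi> 1 \<ge> 0" using Y unfolding young_function_def by auto
  have s0: "s0 > 0" "s0 \<le> 1" using u p1 unfolding s0_def by auto
  have "\<Phi> s0 \<le> s0 * \<Phi> 1" using young_small[OF Y] s0 by simp
  also have "\<dots> \<le> (u / (\<Phi> 1 + 1)) * \<Phi> 1"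
    using p1 unfolding s0_def by (intro mult_right_mono) auto
  also have "\<dots> \<le> u" using p1 u by (simp add: field_simps)
  finally have "s0 \<le> Inf S" using A s0 by auto
  thus "young_inv \<Phi> u > 0" using s0 yi by simp
  show "\<And>s. s > 0 \<Longrightarrow> \<Phi> s \<le> u \<longleftrightarrow> s \<le> young_inv \<Phi> u"
    using A B yi by force
qed

definition Gf :: "(real \<Rightarrow> real) \<Rightarrow> real \<Rightarrow> ereal" where
  "Gf \<Phi> t = Inf (ereal ` {l. l > 0 \<and> \<Phi> (1 / l) * t \<le> 1})"

lemma Gf_mono:
  assumes Y: "young_function \<Phi>" and "0 \<le> t" "t \<le> t'"
  shows "Gf \<Phi> t \<le> Gf \<Phi> t'"
  unfolding Gf_def
proof (intro Inf_superset_mono image_mono subsetI)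
  fix l assume "l \<in> {l. l > 0 \<and> \<Phi> (1 / l) * t' \<le> 1}"
  hence l: "l > 0" "\<Phi> (1 / l) * t' \<le> 1" by auto
  have "\<Phi> (1/l) \<ge> 0" using Y l unfolding young_function_def by auto
  hence "\<Phi> (1 / l) * t \<le> \<Phi> (1 / l) * t'" using assms by (intro mult_left_mono) auto
  thus "l \<in> {l. l > 0 \<and> \<Phi> (1 / l) * t \<le> 1}" using l by auto
qed

lemma Gf_val:
  assumes Y: "young_function \<Phi>" and t: "t > 0"
  shows "Gf \<Phi> t = ereal (inverse (young_inv \<Phi> (1 / t)))"
proof -
  define s where "s = young_inv \<Phi> (1 / t)"
  have s: "s > 0" using young_inv_char(1)[OF Y, of "1/t"] t unfolding s_def by simp
  have "{l. l > 0 \<and> \<Phi> (1 / l) * t \<le> 1} = {1/s..}"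
  proof safe
    fix l assume l: "l > 0" "\<Phi> (1 / l) * t \<le> 1"
    hence "\<Phi> (1/l) \<le> 1/t" using t by (simp add: field_simps)
    hence "1/l \<le> s" using young_inv_char(2)[OF Y, of "1/t" "1/l"] t l unfolding s_def by simp
    thus "1/s \<le> l" using l s by (simp add: field_simps)
  next
    fix l assume l: "1/s \<le> l"
    show "l > 0" using l s by (smt (verit) divide_pos_pos)
    hence "1/l \<le> s" using l s by (simp add: field_simps)
    hence "\<Phi> (1/l) \<le> 1/t" using young_inv_char(2)[OF Y, of "1/t" "1/l"] t \<open>l > 0\<close> unfolding s_def by simp
    thus "\<Phi> (1 / l) * t \<le> 1" using t by (simp add: field_simps)
  qed
  hence "Gf \<Phi> t = Inf (ereal ` {1/s..})" unfolding Gf_def by simp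
  also have "\<dots> = ereal (1/s)"
    by (intro antisym Inf_lower Inf_greatest) auto
  finally show ?thesis unfolding s_def by (simp add: divide_inverse)
qed


lemma boxmeas:
  fixes l u :: "nat \<Rightarrow> real"
  shows "PiE {..<n} (\<lambda>i. {l i..u i}) \<in> sets (Rn n)"
    and "emeasure (Rn n) (PiE {..<n} (\<lambda>i. {l i..u i})) = ennreal (\<Prod>i<n. max 0 (u i - l i))"
proof -
  interpret product_sigma_finite "\<lambda>_. lborel" by standard
  show "PiE {..<n} (\<lambda>i. {l i..u i}) \<in> sets (Rn n)"
    unfolding Rn_def by (rule sets_PiM_I_finite) auto
  have "emeasure (Rn n) (PiE {..<n} (\<lambda>i. {l i..u i})) = (\<Prod>i<n. emeasure lborel {l i..u i})"
    unfolding Rn_def by (rule emeasure_PiM) auto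
  also have "\<dots> = (\<Prod>i<n. ennreal (max 0 (u i - l i)))"
    by (intro prod.cong) (auto simp: emeasure_lborel_Icc_eq)
  also have "\<dots> = ennreal (\<Prod>i<n. max 0 (u i - l i))"
    by (intro prod_ennreal) auto
  finally show "emeasure (Rn n) (PiE {..<n} (\<lambda>i. {l i..u i})) = ennreal (\<Prod>i<n. max 0 (u i - l i))" .
qed

lemma space_Rn: "space (Rn n) = PiE {..<n} (\<lambda>_. UNIV)"
  unfolding Rn_def by (simp add: space_PiM)

lemma cube_eq: "cube n c r = PiE {..<n} (\<lambda>i. {c i - r..c i + r})"
proof (intro set_eqI iffI)
  fix x assume "x \<in> cube n c r"
  hence "x \<in> PiE {..<n} (\<lambda>_. UNIV)" "\<forall>i<n. \<bar>x i - c i\<bar> \<le> r"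
    unfolding cube_def space_Rn by auto
  thus "x \<in> PiE {..<n} (\<lambda>i. {c i - r..c i + r})"
    unfolding PiE_def Pi_def extensional_def by (auto simp: abs_le_iff)
next
  fix x assume "x \<in> PiE {..<n} (\<lambda>i. {c i - r..c i + r})"
  hence "x \<in> PiE {..<n} (\<lambda>_. UNIV)" "\<forall>i<n. \<bar>x i - c i\<bar> \<le> r"
    unfolding PiE_def Pi_def extensional_def by (auto simp: abs_le_iff)
  thus "x \<in> cube n c r" unfolding cube_def space_Rn by auto
qed

lemma norm_cube:
  fixes a c :: "nat \<Rightarrow> real"
  assumes Y: "young_function \<Phi>" and kn: "k \<le> n" and r: "r > 0"
  defines "E \<equiv> {x \<in> space (Rn n). \<forall>j<k. 0 \<le> x j \<and> x j \<le> a j}"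
  shows "orlicz_norm n \<Phi> (indicator E) (cube n c r) =
     Gf \<Phi> ((\<Prod>i<n. max 0 ((if i < k then min (c i + r) (a i) else c i + r)
                             - (if i < k then max (c i - r) 0 else c i - r))) / (2*r)^n)"
proof -
  define l where "l i = (if i < k then max (c i - r) 0 else c i - r)" for i
  define u where "u i = (if i < k then min (c i + r) (a i) else c i + r)" for i
  define P where "P = (\<Prod>i<n. max 0 (u i - l i))"
  have P0: "P \<ge> 0" unfolding P_def by (intro prod_nonneg) auto
  have EQ: "E \<inter> cube n c r = PiE {..<n} (\<lambda>i. {l i..u i})"
  proof (intro set_eqI iffI)
    fix x assume "x \<in> E \<inter> cube n c r"
    hence "x \<in> PiE {..<n} (\<lambda>i. {c i - r..c i + r})" "\<forall>j<k. 0 \<le> x j \<and> x j \<le> a j"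
      unfolding cube_eq E_def by auto
    thus "x \<in> PiE {..<n} (\<lambda>i. {l i..u i})"
      unfolding PiE_def Pi_def extensional_def l_def u_def by auto
  next
    fix x assume x: "x \<in> PiE {..<n} (\<lambda>i. {l i..u i})"
    hence "x \<in> PiE {..<n} (\<lambda>i. {c i - r..c i + r})"
      unfolding PiE_def Pi_def extensional_def l_def u_def
      by (auto split: if_splits)
    moreover have "\<forall>j<k. 0 \<le> x j \<and> x j \<le> a j"
    proof (intro allI impI)
      fix j assume "j < k"
      hence "j < n" using kn by simp
      hence "x j \<in> {l j..u j}" using x by (auto simp: PiE_def Pi_def)
      thus "0 \<le> x j \<and> x j \<le> a j" using \<open>j < k\<close> unfolding l_def u_def by auto
    qed
    moreover have "x \<in> space (Rn n)" using x unfolding space_Rn PiE_def Pi_def extensional_def by auto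
    ultimately show "x \<in> E \<inter> cube n c r" unfolding cube_eq E_def by auto
  qed
  have EQs: "E \<inter> cube n c r \<in> sets (Rn n)" and EQm: "emeasure (Rn n) (E \<inter> cube n c r) = ennreal P"
    unfolding EQ P_def by (rule boxmeas)+
  have Qm: "measure (Rn n) (cube n c r) = (2*r)^n"
  proof -
    have "emeasure (Rn n) (cube n c r) = ennreal (\<Prod>i<n. max 0 ((c i + r) - (c i - r)))"
      unfolding cube_eq by (rule boxmeas)
    also have "\<dots> = ennreal ((2*r)^n)" using r by simp
    finally show ?thesis unfolding measure_def using r by simp
  qed
  have Z: "\<Phi> 0 = 0" and nn: "\<And>t. t \<ge> 0 \<Longrightarrow> \<Phi> t \<ge> 0" using Y unfolding young_function_def by auto
  have int: "(\<integral>\<^sup>+ x \<in> cube n c r. ennreal (\<Phi> (\<bar>indicator E x\<bar> / lam)) \<partial>Rn n)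
        = ennreal (\<Phi> (1/lam)) * ennreal P" for lam :: real
  proof -
    have "(\<integral>\<^sup>+ x \<in> cube n c r. ennreal (\<Phi> (\<bar>indicator E x\<bar> / lam)) \<partial>Rn n)
        = (\<integral>\<^sup>+ x. ennreal (\<Phi> (1/lam)) * indicator (E \<inter> cube n c r) x \<partial>Rn n)"
      by (intro nn_integral_cong) (auto simp: indicator_def Z)
    also have "\<dots> = ennreal (\<Phi> (1/lam)) * ennreal P"
      using EQs EQm by (simp add: nn_integral_cmult_indicator)
    finally show ?thesis .
  qed
  have cond: "(ennreal (1 / measure (Rn n) (cube n c r)) *
          (\<integral>\<^sup>+ x \<in> cube n c r. ennreal (\<Phi> (\<bar>indicator E x\<bar> / lam)) \<partial>Rn n) \<le> 1)
       \<longleftrightarrow> \<Phi> (1 / lam) * (P / (2*r)^n) \<le> 1" if "lam > 0" for lam :: real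
  proof -
    have f: "\<Phi> (1/lam) \<ge> 0" using nn that by simp
    have "ennreal (1 / measure (Rn n) (cube n c r)) *
          (\<integral>\<^sup>+ x \<in> cube n c r. ennreal (\<Phi> (\<bar>indicator E x\<bar> / lam)) \<partial>Rn n)
        = ennreal (1 / (2*r)^n) * (ennreal (\<Phi> (1/lam)) * ennreal P)"
      unfolding int Qm ..
    also have "\<dots> = ennreal (\<Phi> (1 / lam) * (P / (2*r)^n))"
      using f P0 r by (simp add: ennreal_mult[symmetric] mult_ac)
    finally show ?thesis by simp
  qed
  have "orlicz_norm n \<Phi> (indicator E) (cube n c r) = Gf \<Phi> (P / (2*r)^n)"
    unfolding orlicz_norm_def Gf_def
    by (rule arg_cong[where f = "\<lambda>S. Inf (ereal ` S)"]) (use cond in auto)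
  thus ?thesis unfolding P_def l_def u_def .
qed


lemma T_le:
  fixes a c :: "nat \<Rightarrow> real"
  assumes r: "r > 0" and a: "\<forall>j<k. a j > 0"
  shows "(\<Prod>i<n. max 0 ((if i < k then min (c i + r) (a i) else c i + r)
                             - (if i < k then max (c i - r) 0 else c i - r))) / (2*r)^n
    \<le> (\<Prod>i<n. if i < k then min (a i) (2*r) else 2*r) / (2*r)^n"
  using r a by (intro divide_right_mono prod_mono) (auto simp: max_def min_def)

lemma T_nonneg:
  fixes a c :: "nat \<Rightarrow> real"
  assumes r: "r > 0"
  shows "0 \<le> (\<Prod>i<n. max 0 ((if i < k then min (c i + r) (a i) else c i + r)
                             - (if i < k then max (c i - r) 0 else c i - r))) / (2*r)^n"
  using r by (intro divide_nonneg_pos prod_nonneg) auto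

lemma T_eq:
  fixes a :: "nat \<Rightarrow> real"
  assumes R: "R > 0" and a: "\<forall>j<k. a j > 0"
  shows "(\<Prod>i<n. max 0 ((if i < k then min (a i / 2 + R/2) (a i) else a i / 2 + R/2)
                             - (if i < k then max (a i / 2 - R/2) 0 else a i / 2 - R/2))) / (2*(R/2))^n
    = (\<Prod>i<n. if i < k then min (a i) R else R) / R^n"
  using R a by (intro arg_cong2[where f="(/)"] prod.cong) (auto simp: max_def min_def)

lemma M_props:
  fixes a :: "nat \<Rightarrow> real"
  assumes R: "R > 0" and a: "\<forall>j<k. a j > 0" and kn: "k \<le> n"
  shows "(\<Prod>i<n. if i < k then min (a i) R else R) / R^n > 0"
    and "1 / ((\<Prod>i<n. if i < k then min (a i) R else R) / R^n) = R ^ k / (\<Prod>j<k. min (a j) R)"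
proof -
  have "(\<Prod>i<n. if i < k then min (a i) R else R)
      = (\<Prod>i\<in>{..<k}. if i < k then min (a i) R else R) * (\<Prod>i\<in>{k..<n}. if i < k then min (a i) R else R)"
  proof -
    have e: "{..<n} = {..<k} \<union> {k..<n}" using kn by auto
    show ?thesis unfolding e by (rule prod.union_disjoint) auto
  qed
  also have "(\<Prod>i\<in>{..<k}. if i < k then min (a i) R else R) = (\<Prod>j<k. min (a j) R)"
    by (intro prod.cong) auto
  also have "(\<Prod>i\<in>{k..<n}. if i < k then min (a i) R else R) = R ^ (n - k)"
    by simp
  finally have eq: "(\<Prod>i<n. if i < k then min (a i) R else R) = (\<Prod>j<k. min (a j) R) * R ^ (n - k)" .
  have P: "(\<Prod>j<k. min (a j) R) > 0" using a R by (intro prod_pos) auto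
  have Rn: "R ^ n = R ^ k * R ^ (n - k)" using kn by (simp add: power_add[symmetric])
  show "(\<Prod>i<n. if i < k then min (a i) R else R) / R^n > 0"
    unfolding eq using P R by simp
  show "1 / ((\<Prod>i<n. if i < k then min (a i) R else R) / R^n) = R ^ k / (\<Prod>j<k. min (a j) R)"
    unfolding eq Rn using P R by (simp add: field_simps)
qed

theorem lemma4p13:
  fixes \<Phi> \<phi> :: "real \<Rightarrow> real" and n k :: nat and a :: "nat \<Rightarrow> real"
  assumes "young_function \<Phi>" and "G_dec_1 \<phi>" and "n \<ge> 2"
    and "2 \<le> k" and "k \<le> n" and "\<forall>j<k. a j > 0"
  shows "orlicz_morrey_cube n \<Phi> \<phi>
           (indicator {x \<in> space (Rn n). \<forall>j<k. 0 \<le> x j \<and> x j \<le> a j})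
       = (SUP R \<in> {0<..}. ereal (1 / \<phi> R * inverse (young_inv \<Phi> (R ^ k / (\<Prod>j<k. min (a j) R)))))"
proof -
  note Y = assms(1) and kn = assms(5) and a = assms(6)
  have phi: "\<And>r. r > 0 \<Longrightarrow> \<phi> r > 0" using assms(2) unfolding G_dec_1_def by auto
  define E where "E = {x \<in> space (Rn n). \<forall>j<k. 0 \<le> x j \<and> x j \<le> a j}"
  define M where "M R = (\<Prod>i<n. if i < k then min (a i) R else R) / R^n" for R
  define trm where "trm R = ereal (1 / \<phi> R * inverse (young_inv \<Phi> (R ^ k / (\<Prod>j<k. min (a j) R))))" for R
  have trmG: "trm R = Gf \<Phi> (M R) / ereal (\<phi> R)" if R: "R > 0" for R
  proof -
    have "Gf \<Phi> (M R) = ereal (inverse (young_inv \<Phi> (R ^ k / (\<Prod>j<k. min (a j) R))))"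
      using Gf_val[OF Y M_props(1)[OF R a kn]] M_props(2)[OF R a kn] unfolding M_def by simp
    thus ?thesis unfolding trm_def using phi[OF R] by (simp add: divide_inverse mult_ac)
  qed
  show ?thesis
    unfolding orlicz_morrey_cube_def E_def[symmetric] trm_def[symmetric]
  proof (rule antisym)
    show "(SUP ar \<in> {(a, r). r > (0::real)}. orlicz_norm n \<Phi> (indicator E) (cube n (fst ar) (snd ar)) / ereal (\<phi> (2 * snd ar)))
        \<le> (SUP R \<in> {0<..}. trm R)"
    proof (rule SUP_least, clarsimp)
      fix c :: "nat \<Rightarrow> real" and r :: real assume r: "r > 0"
      have "orlicz_norm n \<Phi> (indicator E) (cube n c r) \<le> Gf \<Phi> (M (2*r))"
        unfolding E_def norm_cube[OF Y kn r] M_def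
        by (rule Gf_mono[OF Y T_nonneg[OF r] T_le[OF r a]])
      hence "orlicz_norm n \<Phi> (indicator E) (cube n c r) / ereal (\<phi> (2 * r)) \<le> trm (2*r)"
      proof -
        have "trm (2*r) = Gf \<Phi> (M (2*r)) / ereal (\<phi> (2*r))" by (rule trmG) (use r in simp)
        thus ?thesis using phi[of "2*r"] r \<open>orlicz_norm n \<Phi> (indicator E) (cube n c r) \<le> Gf \<Phi> (M (2*r))\<close>
          by (simp del: ereal_divide)
      qed
      also have "\<dots> \<le> (SUP R \<in> {0<..}. trm R)" using r by (intro SUP_upper) auto
      finally show "orlicz_norm n \<Phi> (indicator E) (cube n c r) / ereal (\<phi> (2 * r)) \<le> (SUP R \<in> {0<..}. trm R)" .
    qed
  next
    show "(SUP R \<in> {0<..}. trm R) \<le> (SUP ar \<in> {(a, r). r > (0::real)}. orlicz_norm n \<Phi> (indicator E) (cube n (fst ar) (snd ar)) / ereal (\<phi> (2 * snd ar)))"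
    proof (rule SUP_least)
      fix R :: real assume "R \<in> {0<..}"
      hence R: "R > 0" by simp
      define c0 where "c0 i = a i / 2" for i
      have R2: "R/2 > 0" using R by simp
      have "trm R = Gf \<Phi> (M R) / ereal (\<phi> R)" using trmG[OF R] .
      also have "Gf \<Phi> (M R) = orlicz_norm n \<Phi> (indicator E) (cube n c0 (R/2))"
        unfolding E_def norm_cube[OF Y kn R2] M_def c0_def T_eq[OF R a] ..
      also have "\<phi> R = \<phi> (2 * snd (c0, R/2))" by simp
      also have "orlicz_norm n \<Phi> (indicator E) (cube n c0 (R/2)) / ereal (\<phi> (2 * snd (c0, R/2)))
          = orlicz_norm n \<Phi> (indicator E) (cube n (fst (c0, R/2)) (snd (c0, R/2))) / ereal (\<phi> (2 * snd (c0, R/2)))"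
        by simp
      also have "\<dots> \<le> (SUP ar \<in> {(a, r). r > (0::real)}. orlicz_norm n \<Phi> (indicator E) (cube n (fst ar) (snd ar)) / ereal (\<phi> (2 * snd ar)))"
        using R2 by (intro SUP_upper) auto
      finally show "trm R \<le> \<dots>" .
    qed
  qed
qed

end
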